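(* If $R \subseteq \mathbb{N}$ is Turing computable and $A \subseteq \mathbb{N}$ is bi-immune, then the image set $\sigma_R(A) = \{\sigma_R(a) : a \in A\}$ is bi-immune.
   Context: $\mathbb{N}$ denotes the non-negative integers; $g \circ f$ means apply $f$ first. For $i \in \mathbb{N}$, $\sigma_{(i)}$ is the permutation of $\mathbb{N}$ swapping $i$ and $i+1$ and fixing all other numbers. For $R \subseteq \mathbb{N}$ with increasing enumeration $r_0 < r_1 < \cdots$, define $\sigma_R : \mathbb{N} \to \mathbb{N}$ by $\sigma_R(x) = \lim_{n \to \infty} (\sigma_{(r_0)} \circ \sigma_{(r_1)} \circ \cdots \circ \sigma_{(r_n)})(x)$ (eventually constant for each $x$; for finite $R$ it is the finite composition, $\sigma_\emptyset = \mathrm{id}$). A set $A$ is immune if it is infinite and contains no infinite computably enumerable subset; $A$ is bi-immune if both $A$ and $\mathbb{N} - A$ are immune. *)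

theory Defs
  imports Main
begin

datatype recf =
    Zr
  | Sc
  | Pj nat
  | Cn recf "recf list"
  | Pr recf recf
  | Mn recf

inductive evalr :: "recf \<Rightarrow> nat list \<Rightarrow> nat \<Rightarrow> bool" where
  zero: "evalr Zr xs 0"
| succ: "evalr Sc (x # xs) (Suc x)"
| proj: "i < length xs \<Longrightarrow> evalr (Pj i) xs (xs ! i)"
| comp: "list_all2 (\<lambda>g y. evalr g xs y) gs ys \<Longrightarrow> evalr f ys z \<Longrightarrow> evalr (Cn f gs) xs z"
| prim0: "evalr f xs z \<Longrightarrow> evalr (Pr f g) (0 # xs) z"
| primS: "evalr (Pr f g) (n # xs) y \<Longrightarrow> evalr g (n # y # xs) z \<Longrightarrow> evalr (Pr f g) (Suc n # xs) z"
| mu: "evalr f (n # xs) 0 \<Longrightarrow> (\<forall>m<n. \<exists>y. evalr f (m # xs) (Suc y)) \<Longrightarrow> evalr (Mn f) xs n"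

definition computable_set :: "nat set \<Rightarrow> bool" where
  "computable_set R \<longleftrightarrow> (\<exists>f. \<forall>x. evalr f [x] (if x \<in> R then 1 else 0))"

definition ce_set :: "nat set \<Rightarrow> bool" where
  "ce_set W \<longleftrightarrow> (\<exists>f. W = {x. \<exists>y. evalr f [x] y})"

definition immune :: "nat set \<Rightarrow> bool" where
  "immune A \<longleftrightarrow> infinite A \<and> \<not> (\<exists>W. W \<subseteq> A \<and> infinite W \<and> ce_set W)"

definition bi_immune :: "nat set \<Rightarrow> bool" where
  "bi_immune A \<longleftrightarrow> immune A \<and> immune (UNIV - A)"

definition sw :: "nat \<Rightarrow> nat \<Rightarrow> nat" where
  "sw i x = (if x = i then Suc i else if x = Suc i then i else x)"

text \<open>sigma_pref R n = sigma_(r_0) o ... o sigma_(r_k), where r_0 < ... < r_k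
  are the elements of R below n (the composition is the identity if there are none).\<close>
fun sigma_pref :: "nat set \<Rightarrow> nat \<Rightarrow> nat \<Rightarrow> nat" where
  "sigma_pref R 0 = id"
| "sigma_pref R (Suc n) = (if n \<in> R then sigma_pref R n \<circ> sw n else sigma_pref R n)"

definition sigmaR :: "nat set \<Rightarrow> nat \<Rightarrow> nat" where
  "sigmaR R x = (THE y. eventually (\<lambda>n. sigma_pref R n x = y) sequentially)"

end

theory Submission
  imports Defs
begin

inductive_cases ZrE: "evalr Zr xs y"
inductive_cases ScE: "evalr Sc xs y"
inductive_cases PjE: "evalr (Pj i) xs y"
inductive_cases CnE: "evalr (Cn f gs) xs y"
inductive_cases Pr0E: "evalr (Pr f g) (0 # xs) y"
inductive_cases PrSE: "evalr (Pr f g) (Suc n # xs) y"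
inductive_cases MnE: "evalr (Mn f) xs y"
lemma list_det:
  "list_all2 (\<lambda>g y. evalr g xs y \<and> (\<forall>y'. evalr g xs y' \<longrightarrow> y = y')) gs ys \<Longrightarrow>
   list_all2 (\<lambda>g y. evalr g xs y) gs ys' \<Longrightarrow> ys = ys'"
  proof (induction gs arbitrary: ys ys')
    case Nil then show ?case by simp
  next
    case (Cons g gs)
    from Cons.prems(1) obtain u us where u: "ys = u # us" "\<forall>y'. evalr g xs y' \<longrightarrow> u = y'"
       "list_all2 (\<lambda>g y. evalr g xs y \<and> (\<forall>y'. evalr g xs y' \<longrightarrow> y = y')) gs us"
      unfolding list_all2_Cons1 by blast
    from Cons.prems(2) obtain u' us' where u': "ys' = u' # us'" "evalr g xs u'"
       "list_all2 (\<lambda>g y. evalr g xs y) gs us'"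
      unfolding list_all2_Cons1 by blast
    have "u = u'" using u(2) u'(2) by blast
    moreover have "us = us'" using Cons.IH u(3) u'(3) by blast
    ultimately show ?case using u(1) u'(1) by simp
  qed

lemma evalr_det: "evalr f xs y \<Longrightarrow> evalr f xs y' \<Longrightarrow> y = y'"
proof (induction arbitrary: y' rule: evalr.induct)
  case (zero xs)
  show ?case using zero.prems by (elim ZrE) simp
next
  case (succ x xs)
  show ?case using succ.prems by (elim ScE) simp
next
  case (proj i xs)
  show ?case using proj.prems by (elim PjE) simp
next
  case (comp xs gs ys f z)
  from comp.prems obtain ys' where a: "list_all2 (\<lambda>g y. evalr g xs y) gs ys'" and b: "evalr f ys' y'"
    by (rule CnE) blast
  have "ys = ys'" by (rule list_det[OF comp.IH(1) a])
  with b comp.IH(2) show ?case by blast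
next
  case (prim0 f xs z g)
  show ?case using prim0.prems by (elim Pr0E) (rule prim0.IH)
next
  case (primS f g n xs y z)
  from primS.prems obtain y2 where "evalr (Pr f g) (n # xs) y2" "evalr g (n # y2 # xs) y'"
    by (elim PrSE) simp
  with primS.IH show ?case by blast
next
  case (mu f n xs)
  from mu.prems have a: "evalr f (y' # xs) 0" and b: "\<forall>m<y'. \<exists>y. evalr f (m # xs) (Suc y)"
    by (rule MnE, blast)+
  show ?case
  proof (rule ccontr)
    assume "n \<noteq> y'"
    then consider "n < y'" | "y' < n" by linarith
    then show False
    proof cases
      case 1
      with b obtain y where "evalr f (n # xs) (Suc y)" by blast
      with mu.IH(1) have "0 = Suc y" by blast
      then show False by simp
    next
      case 2
      with mu.IH(2) obtain y where "evalr f (y' # xs) (Suc y)"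
        "\<forall>w. evalr f (y' # xs) w \<longrightarrow> Suc y = w" by blast
      with a have "Suc y = 0" by blast
      then show False by simp
    qed
  qed
qed

lemma sw_fix: "x \<noteq> i \<Longrightarrow> x \<noteq> Suc i \<Longrightarrow> sw i x = x"
  by (simp add: sw_def)

lemma pref_above: "k < y \<Longrightarrow> sigma_pref R k y = y"
  by (induction k) (auto simp: sw_fix)

lemma pref_stab: "Suc x \<le> n \<Longrightarrow> sigma_pref R n x = sigma_pref R (Suc x) x"
proof (induction n)
  case 0 then show ?case by simp
next
  case (Suc n)
  show ?case
  proof (cases "Suc x = Suc n")
    case True then show ?thesis by simp
  next
    case False
    then have "Suc x \<le> n" using Suc.prems by simp
    then show ?thesis using Suc.IH by (auto simp: sw_fix)
  qed
qed

lemma sigmaR_eq: "sigmaR R x = sigma_pref R (Suc x) x"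
  unfolding sigmaR_def
proof (rule the_equality)
  show "\<forall>\<^sub>F n in sequentially. sigma_pref R n x = sigma_pref R (Suc x) x"
    unfolding eventually_sequentially using pref_stab by blast
next
  fix y assume "\<forall>\<^sub>F n in sequentially. sigma_pref R n x = y"
  then obtain N where N: "\<forall>n\<ge>N. sigma_pref R n x = y" unfolding eventually_sequentially by blast
  have "sigma_pref R (max N (Suc x)) x = y" using N by simp
  moreover have "sigma_pref R (max N (Suc x)) x = sigma_pref R (Suc x) x"
    by (rule pref_stab) simp
  ultimately show "y = sigma_pref R (Suc x) x" by simp
qed

fun srun :: "nat set \<Rightarrow> nat \<Rightarrow> nat" where
  "srun R 0 = 0"
| "srun R (Suc k) = (if k \<in> R then srun R k else Suc k)"

lemma pref_diag: "sigma_pref R k k = srun R k"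
proof (induction k)
  case 0 then show ?case by simp
next
  case (Suc k)
  have "sw k (Suc k) = k" by (simp add: sw_def)
  then show ?case using Suc pref_above[of k "Suc k" R] by auto
qed

lemma sigmaR_formula: "sigmaR R x = (if x \<in> R then Suc x else srun R x)"
  using pref_above[of x "Suc x" R] pref_diag[of R x]
  by (simp add: sigmaR_eq sw_def)

lemma srun_le: "srun R x \<le> x"
  by (induction x) auto

lemma sigmaR_le: "sigmaR R x \<le> Suc x"
  using srun_le[of R x] by (simp add: sigmaR_formula)

lemma inj_sw: "inj (sw i)"
  unfolding inj_def sw_def by auto

lemma inj_pref: "inj (sigma_pref R n)"
  by (induction n) (auto simp: inj_sw inj_compose)

lemma inj_sigmaR: "inj (sigmaR R)"
proof (rule injI)
  fix x y assume h: "sigmaR R x = sigmaR R y"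
  let ?n = "Suc (max x y)"
  have "sigmaR R x = sigma_pref R ?n x" using pref_stab[of x ?n R] by (simp add: sigmaR_eq)
  moreover have "sigmaR R y = sigma_pref R ?n y" using pref_stab[of y ?n R] by (simp add: sigmaR_eq)
  ultimately show "x = y" using h inj_pref[of R ?n] by (auto dest: injD)
qed

lemma finite_nonrange: "finite (UNIV - range (sigmaR R))"
proof (rule ccontr)
  assume "infinite (UNIV - range (sigmaR R))"
  then obtain S where S: "S \<subseteq> UNIV - range (sigmaR R)" "finite S" "card S = 2"
    by (meson infinite_arbitrarily_large)
  define n where "n = Suc (Max S)"
  have Sle: "S \<subseteq> {0..n}" using S(2) by (auto simp: n_def le_SucI)
  have img: "sigmaR R ` {0..<n} \<subseteq> {0..n}"
  proof
    fix y assume "y \<in> sigmaR R ` {0..<n}"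
    then obtain x where "x < n" "y = sigmaR R x" by auto
    then show "y \<in> {0..n}" using sigmaR_le[of R x] by simp
  qed
  have cimg: "card (sigmaR R ` {0..<n}) = n"
    using card_image[OF inj_on_subset[OF inj_sigmaR subset_UNIV]] by simp
  have disj: "S \<inter> sigmaR R ` {0..<n} = {}" using S(1) by auto
  have "S \<union> sigmaR R ` {0..<n} \<subseteq> {0..n}" using Sle img by auto
  then have "card (S \<union> sigmaR R ` {0..<n}) \<le> Suc n"
    by (metis card_atLeastAtMost card_mono finite_atLeastAtMost minus_nat.diff_0)
  moreover have "card (S \<union> sigmaR R ` {0..<n}) = 2 + n"
    using card_Un_disjoint[OF S(2) _ disj] cimg S(3) by simp
  ultimately show False by simp
qed

lemma evalr_proj': "i < length xs \<Longrightarrow> y = xs ! i \<Longrightarrow> evalr (Pj i) xs y"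
  using evalr.proj by simp

definition Cond :: recf where "Cond = Pr (Pj 1) (Pj 2)"

lemma eval_Cond: "evalr Cond [n, a, b] (if n = 0 then b else a)"
proof (induction n)
  case 0 then show ?case unfolding Cond_def by (auto intro!: evalr.prim0 evalr_proj')
next
  case (Suc n)
  then obtain y where "evalr (Pr (Pj 1) (Pj 2)) [n, a, b] y" unfolding Cond_def by blast
  then show ?case unfolding Cond_def
    by (auto intro!: evalr.primS evalr_proj')
qed

lemma eval_Cn1: "list_all2 (\<lambda>g y. evalr g xs y) gs ys \<Longrightarrow> evalr f ys z \<Longrightarrow> evalr (Cn f gs) xs z"
  by (rule evalr.comp)

locale chr =
  fixes R :: "nat set" and c :: recf
  assumes c: "\<And>x. evalr c [x] (if x \<in> R then 1 else 0)"
begin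

definition Gs :: recf where "Gs = Cn Cond [Cn c [Pj 0], Pj 1, Cn Sc [Pj 0]]"
definition S :: recf where "S = Pr Zr Gs"
definition Sig :: recf where "Sig = Cn Cond [Cn c [Pj 0], Cn Sc [Pj 0], Cn S [Pj 0]]"

lemma eval_c0: "evalr (Cn c [Pj 0]) (x # xs) (if x \<in> R then 1 else 0)"
  by (rule evalr.comp[where ys="[x]", OF _ c]) (auto intro: evalr_proj')

lemma eval_Sc0: "evalr (Cn Sc [Pj 0]) (x # xs) (Suc x)"
  by (rule evalr.comp[where ys="[x]", OF _ evalr.succ]) (auto intro: evalr_proj')

lemma eval_S: "evalr S [k] (srun R k)"
proof (induction k)
  case 0 then show ?case unfolding S_def by (auto intro: evalr.prim0 evalr.zero)
next
  case (Suc k)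
  have "evalr Gs [k, srun R k] (srun R (Suc k))"
    unfolding Gs_def
    apply (rule evalr.comp[where ys="[if k \<in> R then 1 else 0, srun R k, Suc k]"])
     apply (unfold list_all2_Cons list_all2_Nil)
     apply (intro conjI eval_c0 eval_Sc0 evalr_proj' TrueI; simp)
    using eval_Cond[of "if k \<in> R then 1 else 0" "srun R k" "Suc k"] by auto
  then show ?case using Suc unfolding S_def by (auto intro: evalr.primS)
qed

lemma eval_S0: "evalr (Cn S [Pj 0]) [x] (srun R x)"
  by (rule evalr.comp[where ys="[x]", OF _ eval_S]) (auto intro: evalr_proj')

lemma eval_Sig: "evalr Sig [x] (sigmaR R x)"
  unfolding Sig_def
  apply (rule evalr.comp[where ys="[if x \<in> R then 1 else 0, Suc x, srun R x]"])
   apply (unfold list_all2_Cons list_all2_Nil)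
   apply (intro conjI eval_c0 eval_Sc0 eval_S0 TrueI)
  using eval_Cond[of "if x \<in> R then 1 else 0" "Suc x" "srun R x"] by (auto simp: sigmaR_formula)

lemma ce_preimage:
  assumes "ce_set W" shows "ce_set (sigmaR R -` W)"
proof -
  from assms obtain f where W: "W = {x. \<exists>y. evalr f [x] y}" unfolding ce_set_def by blast
  have "sigmaR R -` W = {x. \<exists>y. evalr (Cn f [Sig]) [x] y}"
  proof (intro set_eqI iffI)
    fix x assume "x \<in> sigmaR R -` W"
    then obtain y where "evalr f [sigmaR R x] y" using W by auto
    then have "evalr (Cn f [Sig]) [x] y"
      by (intro evalr.comp[where ys="[sigmaR R x]"]) (auto intro: eval_Sig)
    then show "x \<in> {x. \<exists>y. evalr (Cn f [Sig]) [x] y}" by blast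
  next
    fix x assume "x \<in> {x. \<exists>y. evalr (Cn f [Sig]) [x] y}"
    then obtain y where "evalr (Cn f [Sig]) [x] y" by blast
    then obtain ys where a: "list_all2 (\<lambda>g y. evalr g [x] y) [Sig] ys" and b: "evalr f ys y"
      by (rule CnE) blast
    from a obtain u where "ys = [u]" "evalr Sig [x] u"
      by (metis list_all2_Cons1 list_all2_Nil)
    with eval_Sig evalr_det have "ys = [sigmaR R x]" by blast
    with b W show "x \<in> sigmaR R -` W" by auto
  qed
  then show ?thesis unfolding ce_set_def by blast
qed

lemma immune_transfer:
  assumes B: "immune B" and C1: "sigmaR R ` B \<subseteq> C" and C2: "C \<subseteq> sigmaR R ` B \<union> (UNIV - range (sigmaR R))"
  shows "immune C"
proof -
  let ?s = "sigmaR R"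
  have "infinite (?s ` B)" using B unfolding immune_def
    using finite_imageD inj_on_subset[OF inj_sigmaR[of R] subset_UNIV] by blast
  then have infC: "infinite C" using C1 finite_subset by blast
  have "\<not> (\<exists>W. W \<subseteq> C \<and> infinite W \<and> ce_set W)"
  proof
    assume "\<exists>W. W \<subseteq> C \<and> infinite W \<and> ce_set W"
    then obtain W where W: "W \<subseteq> C" "infinite W" "ce_set W" by blast
    let ?V = "?s -` W"
    have "?V \<subseteq> B"
    proof
      fix x assume "x \<in> ?V"
      then have "?s x \<in> ?s ` B" using W(1) C2 by auto
      then show "x \<in> B" using inj_sigmaR by (auto dest: injD)
    qed
    moreover have "infinite ?V"
    proof
      assume "finite ?V"
      then have "finite (?s ` ?V)" by (rule finite_imageI)
      moreover have "W \<subseteq> ?s ` ?V \<union> (UNIV - range ?s)" by auto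
      ultimately show False using W(2) finite_nonrange[of R]
        by (meson finite_Un finite_subset)
    qed
    moreover have "ce_set ?V" using ce_preimage W(3) by blast
    ultimately show False using B unfolding immune_def by blast
  qed
  then show ?thesis using infC unfolding immune_def by blast
qed

end

theorem mainTheorem11:
  fixes R A :: "nat set"
  assumes "computable_set R"
    and "bi_immune A"
  shows "bi_immune (sigmaR R ` A)"
proof -
  from assms(1) obtain c where "\<forall>x. evalr c [x] (if x \<in> R then 1 else 0)"
    unfolding computable_set_def by blast
  then interpret chr R c by unfold_locales blast
  have iA: "immune A" and iC: "immune (UNIV - A)" using assms(2) unfolding bi_immune_def by auto
  have "immune (sigmaR R ` A)"
    by (rule immune_transfer[OF iA]) blast+
  moreover have "immune (UNIV - sigmaR R ` A)"
  proof (rule immune_transfer[OF iC])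
    show "sigmaR R ` (UNIV - A) \<subseteq> UNIV - sigmaR R ` A"
    proof
      fix y assume "y \<in> sigmaR R ` (UNIV - A)"
      then obtain x where x: "x \<notin> A" "y = sigmaR R x" by blast
      have "y \<notin> sigmaR R ` A"
      proof
        assume "y \<in> sigmaR R ` A"
        then obtain a where "a \<in> A" "y = sigmaR R a" by blast
        with x have "sigmaR R a = sigmaR R x" by simp
        then have "a = x" by (rule injD[OF inj_sigmaR])
        with x \<open>a \<in> A\<close> show False by simp
      qed
      then show "y \<in> UNIV - sigmaR R ` A" by simp
    qed
    show "UNIV - sigmaR R ` A \<subseteq> sigmaR R ` (UNIV - A) \<union> (UNIV - range (sigmaR R))"
      by blast
  qed
  ultimately show ?thesis unfolding bi_immune_def by blast
qed

end
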